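(* Let $X$ be a finitely primitive countable Markov shift over the alphabet $\mathbb N$, with associated integer $N\ge0$ and finite set $\Lambda$ of admissible strings of length $N$. Let $\phi\colon X\to\mathbb R$ be measurable and $\mu_\phi$ a Gibbs state for $\phi$. Then there exists $c>0$ such that for every $(a,b)\in\mathbb N^2$ and every integer $n>N$, $\mu_\phi([a]\cap\sigma^{-n}[b])\ge c\,\mu_\phi[a]\,\mu_\phi[b]$.
   Context: $\mathbb N=\{0,1,\dots\}$; $A$ is a 0-1 matrix indexed by $\mathbb N$ without zero rows or columns; $X=\{x\in\mathbb N^{\mathbb N}:A_{x_ix_{i+1}}=1\ \forall i\}$ with left shift $\sigma$. $E^n$: admissible strings of length $n$ (consecutive letters $a,b$ satisfy $A_{ab}=1$); $E^*=\bigcup_{n\ge1}E^n$; $[w]=\{x:x_i=w_i,\ i<|w|\}$. $X$ is finitely primitive if there is an integer $N\ge0$ and a finite set $\Lambda$ of admissible strings of common length $N$ (consisting of the empty string if $N=0$) such that for all $i,j\in E^*$ there is $\lambda\in\Lambda$ with $i\lambda j\in E^*$. $S_n\phi=\sum_{i<n}\phi\circ\sigma^i$. Gibbs state: there are $c_0\ge1$, $P\in\mathbb R$ with $c_0^{-1}\le\mu_\phi[x_0,\dots,x_{n-1}]/\exp(-Pn+S_n\phi(x))\le c_0$ for all $n\ge1$, $x\in X$. *)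

theory Defs
  imports "HOL-Probability.Probability"
begin

text \<open>The transition matrix is a 0-1 matrix A indexed by nat, represented as a
  boolean relation: A a b means the entry A_ab equals 1.\<close>

definition no_zero_rows_cols :: "(nat \<Rightarrow> nat \<Rightarrow> bool) \<Rightarrow> bool" where
  "no_zero_rows_cols A \<longleftrightarrow> (\<forall>a. \<exists>b. A a b) \<and> (\<forall>b. \<exists>a. A a b)"

definition shift_space :: "(nat \<Rightarrow> nat \<Rightarrow> bool) \<Rightarrow> (nat \<Rightarrow> nat) set" where
  "shift_space A = {x. \<forall>i. A (x i) (x (Suc i))}"

definition shift :: "(nat \<Rightarrow> nat) \<Rightarrow> (nat \<Rightarrow> nat)" where
  "shift x = (\<lambda>i. x (Suc i))"

definition admissible :: "(nat \<Rightarrow> nat \<Rightarrow> bool) \<Rightarrow> nat list \<Rightarrow> bool" where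
  "admissible A w \<longleftrightarrow> (\<forall>i. Suc i < length w \<longrightarrow> A (w ! i) (w ! Suc i))"

definition Estar :: "(nat \<Rightarrow> nat \<Rightarrow> bool) \<Rightarrow> nat list set" where
  "Estar A = {w. w \<noteq> [] \<and> admissible A w}"

definition cyl :: "(nat \<Rightarrow> nat \<Rightarrow> bool) \<Rightarrow> nat list \<Rightarrow> (nat \<Rightarrow> nat) set" where
  "cyl A w = {x \<in> shift_space A. \<forall>i < length w. x i = w ! i}"

definition finitely_primitive_with ::
  "(nat \<Rightarrow> nat \<Rightarrow> bool) \<Rightarrow> nat \<Rightarrow> nat list set \<Rightarrow> bool" where
  "finitely_primitive_with A N Lam \<longleftrightarrow>
     finite Lam \<and> (\<forall>l \<in> Lam. length l = N \<and> admissible A l) \<and>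
     (\<forall>i \<in> Estar A. \<forall>j \<in> Estar A. \<exists>l \<in> Lam. admissible A (i @ l @ j))"

definition birkhoff_sum :: "((nat \<Rightarrow> nat) \<Rightarrow> real) \<Rightarrow> nat \<Rightarrow> (nat \<Rightarrow> nat) \<Rightarrow> real" where
  "birkhoff_sum \<phi> n x = (\<Sum>i<n. \<phi> ((shift ^^ i) x))"

definition shift_measurable_space :: "(nat \<Rightarrow> nat \<Rightarrow> bool) \<Rightarrow> (nat \<Rightarrow> nat) measure" where
  "shift_measurable_space A =
     restrict_space (Pi\<^sub>M UNIV (\<lambda>_. count_space (UNIV :: nat set))) (shift_space A)"

definition gibbs_state ::
  "(nat \<Rightarrow> nat \<Rightarrow> bool) \<Rightarrow> ((nat \<Rightarrow> nat) \<Rightarrow> real) \<Rightarrow> (nat \<Rightarrow> nat) measure \<Rightarrow> bool" where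
  "gibbs_state A \<phi> \<mu> \<longleftrightarrow>
     prob_space \<mu> \<and> sets \<mu> = sets (shift_measurable_space A) \<and>
     (\<exists>c0 P. c0 \<ge> 1 \<and>
       (\<forall>n \<ge> 1. \<forall>x \<in> shift_space A.
          inverse c0 \<le> measure \<mu> (cyl A (map x [0..<n])) / exp (- P * real n + birkhoff_sum \<phi> n x)
        \<and> measure \<mu> (cyl A (map x [0..<n])) / exp (- P * real n + birkhoff_sum \<phi> n x) \<le> c0))"

end

theory Submission
  imports Defs
begin

lemma shift_pow: "(shift ^^ k) x = (\<lambda>i. x (i + k))"
  by (induction k arbitrary: x) (auto simp: shift_def)

lemma shift_pow_space: "x \<in> shift_space A \<Longrightarrow> (shift ^^ k) x \<in> shift_space A"
  by (simp add: shift_pow shift_space_def)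

lemma birkhoff_add: "birkhoff_sum \<phi> (p + q) x = birkhoff_sum \<phi> p x + birkhoff_sum \<phi> q ((shift ^^ p) x)"
  unfolding birkhoff_sum_def
  by (induction q) (simp_all add: funpow_add add.commute)

lemma map_cyl: "x \<in> cyl A w \<Longrightarrow> map x [0..<length w] = w"
  by (auto simp: cyl_def intro: nth_equalityI)

lemma cyl_sets: "cyl A w \<in> sets (shift_measurable_space A)"
proof -
  let ?M = "Pi\<^sub>M UNIV (\<lambda>_. count_space (UNIV :: nat set))"
  have "{x \<in> space ?M. \<forall>i < length w. x i = w ! i} \<in> sets ?M"
    by measurable
  moreover have "cyl A w = shift_space A \<inter> {x \<in> space ?M. \<forall>i < length w. x i = w ! i}"
    by (auto simp: cyl_def space_PiM)
  ultimately show ?thesis unfolding shift_measurable_space_def sets_restrict_space by blast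
qed

lemma pt_sets: "{x \<in> shift_space A. x n = b} \<in> sets (shift_measurable_space A)"
proof -
  let ?M = "Pi\<^sub>M UNIV (\<lambda>_. count_space (UNIV :: nat set))"
  have "{x \<in> space ?M. x n = b} \<in> sets ?M"
    by measurable
  moreover have "{x \<in> shift_space A. x n = b} = shift_space A \<inter> {x \<in> space ?M. x n = b}"
    by (auto simp: space_PiM)
  ultimately show ?thesis unfolding shift_measurable_space_def sets_restrict_space by blast
qed


lemma cyl_nth: "x \<in> cyl A u \<Longrightarrow> i < length u \<Longrightarrow> x i = u ! i"
  by (auto simp: cyl_def)

lemma cyl_exists:
  assumes "no_zero_rows_cols A" "admissible A w" "w \<noteq> []"
  shows "\<exists>x. x \<in> cyl A w"
proof -
  define f where "f = (\<lambda>a. SOME b. A a b)"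
  have Af: "A y (f y)" for y using assms(1) unfolding no_zero_rows_cols_def f_def by (metis someI)
  define x where "x = (\<lambda>i. if i < length w then w ! i else (f ^^ (i - length w + 1)) (last w))"
  have "A (x i) (x (Suc i))" for i
  proof (cases "Suc i < length w")
    case True then show ?thesis using assms(2) by (simp add: x_def admissible_def)
  next
    case False
    show ?thesis
    proof (cases "Suc i = length w")
      case True
      then have "x i = last w" using assms(3) by (simp add: x_def last_conv_nth flip: True)
      moreover have "x (Suc i) = f (last w)" using True by (simp add: x_def)
      ultimately show ?thesis using Af by simp
    next
      case F2: False
      with False have "i \<ge> length w" by simp
      then have "x (Suc i) = f (x i)" unfolding x_def by (simp add: Suc_diff_le)
      then show ?thesis using Af by simp
    qed
  qed
  then have "x \<in> cyl A w" by (auto simp: cyl_def shift_space_def x_def)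
  then show ?thesis by blast
qed

locale gb =
  fixes A :: "nat \<Rightarrow> nat \<Rightarrow> bool" and \<phi> :: "(nat \<Rightarrow> nat) \<Rightarrow> real" and \<mu> :: "(nat \<Rightarrow> nat) measure"
    and c0 P :: real
  assumes c0: "c0 \<ge> 1"
  assumes G: "\<forall>n \<ge> 1. \<forall>x \<in> shift_space A.
          inverse c0 \<le> measure \<mu> (cyl A (map x [0..<n])) / exp (- P * real n + birkhoff_sum \<phi> n x)
        \<and> measure \<mu> (cyl A (map x [0..<n])) / exp (- P * real n + birkhoff_sum \<phi> n x) \<le> c0"
begin

definition "E w x = exp (- P * real (length w) + birkhoff_sum \<phi> (length w) x)"

lemma bounds:
  assumes "x \<in> cyl A w" "w \<noteq> []"
  shows "E w x / c0 \<le> measure \<mu> (cyl A w)" "measure \<mu> (cyl A w) \<le> c0 * E w x"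
proof -
  have "x \<in> shift_space A" using assms by (simp add: cyl_def)
  moreover have "length w \<ge> 1" using assms by (cases w) auto
  ultimately have g: "inverse c0 \<le> measure \<mu> (cyl A w) / E w x \<and> measure \<mu> (cyl A w) / E w x \<le> c0"
    using G map_cyl[OF assms(1)] unfolding E_def by metis
  have Ep: "E w x > 0" by (simp add: E_def)
  have c0p: "c0 > 0" using c0 by simp
  show "E w x / c0 \<le> measure \<mu> (cyl A w)" using g Ep c0p
    by (simp add: field_simps)
  show "measure \<mu> (cyl A w) \<le> c0 * E w x" using g Ep by (simp add: field_simps)
qed

lemma qb:
  assumes "x \<in> cyl A (u @ v)" "u \<noteq> []" "v \<noteq> []"
  shows "measure \<mu> (cyl A u) * measure \<mu> (cyl A v) \<le> c0 ^ 3 * measure \<mu> (cyl A (u @ v))"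
proof -
  have xs: "x \<in> shift_space A" using assms by (simp add: cyl_def)
  have xu: "x \<in> cyl A u" using assms(1) by (auto simp: cyl_def nth_append)
  have xv: "(shift ^^ length u) x \<in> cyl A v" using assms(1) xs shift_pow_space[OF xs, of "length u"]
    by (auto simp: cyl_def shift_pow nth_append)
  have EE: "E (u @ v) x = E u x * E v ((shift ^^ length u) x)"
    unfolding E_def by (simp add: birkhoff_add algebra_simps flip: exp_add)
  have c0p: "c0 > 0" using c0 by simp
  have 1: "measure \<mu> (cyl A u) \<le> c0 * E u x" using bounds(2)[OF xu assms(2)] .
  have 2: "measure \<mu> (cyl A v) \<le> c0 * E v ((shift ^^ length u) x)" using bounds(2)[OF xv assms(3)] .
  have 3: "E (u @ v) x / c0 \<le> measure \<mu> (cyl A (u @ v))" using bounds(1)[OF assms(1)] assms(2) by simp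
  have "measure \<mu> (cyl A u) * measure \<mu> (cyl A v) \<le> (c0 * E u x) * (c0 * E v ((shift ^^ length u) x))"
    by (rule mult_mono[OF 1 2]) (auto simp: E_def c0p less_imp_le)
  also have "\<dots> = c0 ^ 3 * (E (u @ v) x / c0)" using c0p by (simp add: EE power3_eq_cube field_simps)
  also have "\<dots> \<le> c0 ^ 3 * measure \<mu> (cyl A (u @ v))" using 3 c0p by (intro mult_left_mono) auto
  finally show ?thesis .
qed

end


theorem lemma2p5:
  fixes A :: "nat \<Rightarrow> nat \<Rightarrow> bool" and N :: nat and Lam :: "nat list set"
    and \<phi> :: "(nat \<Rightarrow> nat) \<Rightarrow> real" and \<mu> :: "(nat \<Rightarrow> nat) measure"
  assumes "no_zero_rows_cols A"
    and "finitely_primitive_with A N Lam"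
    and "\<phi> \<in> borel_measurable (shift_measurable_space A)"
    and "gibbs_state A \<phi> \<mu>"
  shows "\<exists>c > 0. \<forall>a b n. n > N \<longrightarrow>
           measure \<mu> (cyl A [a] \<inter> {x \<in> shift_space A. (shift ^^ n) x \<in> cyl A [b]})
             \<ge> c * measure \<mu> (cyl A [a]) * measure \<mu> (cyl A [b])"
proof -
  note nz = assms(1)
  have ps: "prob_space \<mu>" and sets_eq: "sets \<mu> = sets (shift_measurable_space A)"
    using assms(4) unfolding gibbs_state_def by auto
  interpret prob_space \<mu> by (rule ps)
  obtain c0 P where c0: "c0 \<ge> 1" and G: "\<forall>n \<ge> 1. \<forall>x \<in> shift_space A.
          inverse c0 \<le> measure \<mu> (cyl A (map x [0..<n])) / exp (- P * real n + birkhoff_sum \<phi> n x)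
        \<and> measure \<mu> (cyl A (map x [0..<n])) / exp (- P * real n + birkhoff_sum \<phi> n x) \<le> c0"
    using assms(4) unfolding gibbs_state_def by blast
  interpret gb A \<phi> \<mu> c0 P using c0 G by unfold_locales
  have c0p: "c0 > 0" using c0 by simp
  have finL: "finite Lam" and Ladm: "\<And>l. l \<in> Lam \<Longrightarrow> length l = N \<and> admissible A l"
    and Lcon: "\<And>i j. i \<in> Estar A \<Longrightarrow> j \<in> Estar A \<Longrightarrow> \<exists>l \<in> Lam. admissible A (i @ l @ j)"
    using assms(2) unfolding finitely_primitive_with_def by auto
  have space_eq: "space \<mu> = shift_space A"
    using sets_eq_imp_space_eq[OF sets_eq] by (simp add: shift_measurable_space_def space_PiM space_restrict_space)
  have cs: "cyl A w \<in> sets \<mu>" for w using cyl_sets sets_eq by simp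
  have pos: "measure \<mu> (cyl A l) > 0" if lL: "l \<in> Lam" for l
  proof (cases "l = []")
    case True
    then have "cyl A l = space \<mu>" by (simp add: cyl_def space_eq)
    then show ?thesis by (simp add: prob_space)
  next
    case False
    obtain x where x: "x \<in> cyl A l" using cyl_exists[OF nz] Ladm[OF lL] False by blast
    have "E l x / c0 > 0" using c0p by (simp add: E_def)
    then show ?thesis using bounds(1)[OF x False] by linarith
  qed
  define \<delta> where "\<delta> = Min (insert 1 ((\<lambda>l. measure \<mu> (cyl A l)) ` Lam))"
  have dpos: "\<delta> > 0" unfolding \<delta>_def using finL pos by auto
  have d1: "\<delta> \<le> 1" unfolding \<delta>_def using finL by auto
  have dl: "\<delta> \<le> measure \<mu> (cyl A l)" if "l \<in> Lam" for l unfolding \<delta>_def using finL that by auto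
  define c where "c = \<delta> / c0 ^ 6"
  have cpos: "c > 0" unfolding c_def using dpos c0p by simp
  show ?thesis
  proof (intro exI[of _ c] conjI cpos allI impI)
    fix a b n assume nN: "N < n"
    define m where "m = n - N"
    have m1: "m \<ge> 1" and mN: "m + N = n" using nN by (auto simp: m_def)
    define T where "T = cyl A [a] \<inter> {x \<in> shift_space A. (shift ^^ n) x \<in> cyl A [b]}"
    have Teq: "T = cyl A [a] \<inter> {x \<in> shift_space A. x n = b}"
      unfolding T_def using shift_pow_space[of _ A n] unfolding shift_pow by (auto simp: cyl_def)
    have Ts: "T \<in> sets \<mu>" unfolding Teq using cs pt_sets sets_eq by auto
    define I where "I = (\<lambda>x. map x [0..<m]) ` cyl A [a]"
    have cI: "countable I" by (rule countable_subset[OF subset_UNIV]) simp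
    have IE: "w \<in> Estar A" if "w \<in> I" for w
      using that m1 unfolding I_def Estar_def admissible_def cyl_def shift_space_def by auto
    have bE: "[b] \<in> Estar A" by (simp add: Estar_def admissible_def)
    obtain lam where lam: "\<And>w. w \<in> I \<Longrightarrow> lam w \<in> Lam \<and> admissible A (w @ lam w @ [b])"
      using Lcon[OF _ bE] IE by metis
    define V where "V w = cyl A (w @ lam w @ [b])" for w
    have lenI: "length w = m" if "w \<in> I" for w using that by (auto simp: I_def)
    have hdI: "w ! 0 = a" if "w \<in> I" for w using that m1 by (auto simp: I_def cyl_def)
    have pref: "map x [0..<length u] = u" if "x \<in> cyl A (u @ v)" for x u v
      using that by (auto simp: cyl_def nth_append intro: nth_equalityI)
    have VT: "V w \<subseteq> T" if "w \<in> I" for w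
    proof
      fix x assume x: "x \<in> V w"
      have ll: "length (lam w) = N" using lam[OF that] Ladm by blast
      have "x 0 = a" using x hdI[OF that] lenI[OF that] m1 by (auto simp: V_def cyl_def nth_append)
      moreover have "x n = b" using x lenI[OF that] ll mN
        by (auto simp: V_def cyl_def nth_append) 
      ultimately show "x \<in> T" using x unfolding Teq by (auto simp: V_def cyl_def)
    qed
    have disj: "disjoint_family_on V I"
      unfolding disjoint_family_on_def
    proof (intro ballI impI)
      fix w w' assume w: "w \<in> I" and w': "w' \<in> I" and ne: "w \<noteq> w'"
      show "V w \<inter> V w' = {}"
      proof (rule ccontr)
        assume "V w \<inter> V w' \<noteq> {}"
        then obtain x where "x \<in> V w" "x \<in> V w'" by blast
        then have "map x [0..<length w] = w" "map x [0..<length w'] = w'"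
          unfolding V_def by (auto intro: pref)
        then show False using ne lenI[OF w] lenI[OF w'] by simp
      qed
    qed
    have disj2: "disjoint_family_on (cyl A) I"
      unfolding disjoint_family_on_def
    proof (intro ballI impI)
      fix w w' assume w: "w \<in> I" and w': "w' \<in> I" and ne: "w \<noteq> w'"
      show "cyl A w \<inter> cyl A w' = {}"
      proof (rule ccontr)
        assume "cyl A w \<inter> cyl A w' \<noteq> {}"
        then obtain x where "x \<in> cyl A w" "x \<in> cyl A w'" by blast
        then have "map x [0..<length w] = w" "map x [0..<length w'] = w'"
          by (auto intro: map_cyl)
        then show False using ne lenI[OF w] lenI[OF w'] by simp
      qed
    qed
    have aU: "cyl A [a] = (\<Union>w\<in>I. cyl A w)"
    proof
      show "cyl A [a] \<subseteq> (\<Union>w\<in>I. cyl A w)"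
      proof
        fix x assume x: "x \<in> cyl A [a]"
        then have "x \<in> cyl A (map x [0..<m])" by (auto simp: cyl_def)
        then show "x \<in> (\<Union>w\<in>I. cyl A w)" using x unfolding I_def by blast
      qed
      show "(\<Union>w\<in>I. cyl A w) \<subseteq> cyl A [a]"
        using hdI lenI m1 by (auto simp: cyl_def)
    qed
    have Vb: "c * measure \<mu> (cyl A [b]) * measure \<mu> (cyl A w) \<le> measure \<mu> (V w)" if w: "w \<in> I" for w
    proof -
      have adm: "admissible A (w @ lam w @ [b])" and lL: "lam w \<in> Lam" using lam[OF w] by auto
      obtain x where x: "x \<in> V w" using cyl_exists[OF nz adm] unfolding V_def by auto
      have wne: "w \<noteq> []" using lenI[OF w] m1 by auto
      have q1: "measure \<mu> (cyl A w) * measure \<mu> (cyl A (lam w @ [b])) \<le> c0 ^ 3 * measure \<mu> (V w)"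
        using qb[of x w "lam w @ [b]"] x wne unfolding V_def by simp
      have q2: "\<delta> / c0 ^ 3 * measure \<mu> (cyl A [b]) \<le> measure \<mu> (cyl A (lam w @ [b]))"
      proof (cases "lam w = []")
        case True
        have c3: "c0 ^ 3 \<ge> 1" using c0 by (simp add: one_le_power)
        have "\<delta> \<le> c0 ^ 3" using d1 c3 by linarith
        then have "\<delta> / c0 ^ 3 \<le> 1" using c3 c0p by (simp add: divide_le_eq_1)
        moreover have "measure \<mu> (cyl A [b]) \<ge> 0" by simp
        ultimately have "\<delta> / c0 ^ 3 * measure \<mu> (cyl A [b]) \<le> 1 * measure \<mu> (cyl A [b])"
          by (rule mult_right_mono)
        then show ?thesis using True by simp
      next
        case False
        have xs: "x \<in> shift_space A" using x by (simp add: V_def cyl_def)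
        have ys: "(shift ^^ m) x \<in> shift_space A" by (rule shift_pow_space[OF xs])
        have "\<forall>i < length (lam w @ [b]). (shift ^^ m) x i = (lam w @ [b]) ! i"
        proof (intro allI impI)
          fix i assume "i < length (lam w @ [b])"
          then have "i + m < length (w @ lam w @ [b])" using lenI[OF w] by simp
          then have "x (i + m) = (w @ lam w @ [b]) ! (i + m)" using x by (simp add: V_def cyl_def)
          also have "\<dots> = (lam w @ [b]) ! i" using lenI[OF w] by (simp add: nth_append)
          finally show "(shift ^^ m) x i = (lam w @ [b]) ! i" by (simp add: shift_pow)
        qed
        then have "(shift ^^ m) x \<in> cyl A (lam w @ [b])" using ys by (simp add: cyl_def)
        then have q3: "measure \<mu> (cyl A (lam w)) * measure \<mu> (cyl A [b]) \<le> c0 ^ 3 * measure \<mu> (cyl A (lam w @ [b]))"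
          using qb[of "(shift ^^ m) x" "lam w" "[b]"] False by simp
        have q4: "\<delta> * measure \<mu> (cyl A [b]) \<le> measure \<mu> (cyl A (lam w)) * measure \<mu> (cyl A [b])"
          using dl[OF lL] by (simp add: mult_right_mono)
        have c3p: "c0 ^ 3 > 0" using c0p by simp
        have "\<delta> * measure \<mu> (cyl A [b]) \<le> c0 ^ 3 * measure \<mu> (cyl A (lam w @ [b]))"
          using q3 q4 by linarith
        then show ?thesis using c3p by (simp add: divide_le_eq mult.commute mult.left_commute)
      qed
      have "c * measure \<mu> (cyl A [b]) * measure \<mu> (cyl A w)
          = measure \<mu> (cyl A w) * (\<delta> / c0 ^ 3 * measure \<mu> (cyl A [b])) / c0 ^ 3"
        unfolding c_def using c0p by (simp add: field_simps)
      also have "\<dots> \<le> measure \<mu> (cyl A w) * measure \<mu> (cyl A (lam w @ [b])) / c0 ^ 3"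
        using q2 c0p by (intro divide_right_mono mult_left_mono) auto
      also have "\<dots> \<le> measure \<mu> (V w)" using q1 c0p by (simp add: field_simps)
      finally show ?thesis .
    qed
    have Vs: "V w \<in> sets \<mu>" for w unfolding V_def by (rule cs)
    have "ennreal (c * measure \<mu> (cyl A [b])) * emeasure \<mu> (cyl A [a])
        = ennreal (c * measure \<mu> (cyl A [b])) * (\<integral>\<^sup>+w. emeasure \<mu> (cyl A w) \<partial>count_space I)"
      unfolding aU by (subst emeasure_UN_countable[OF cs cI disj2]) simp
    also have "\<dots> = (\<integral>\<^sup>+w. ennreal (c * measure \<mu> (cyl A [b])) * emeasure \<mu> (cyl A w) \<partial>count_space I)"
      by (rule nn_integral_cmult[symmetric]) simp
    also have "\<dots> \<le> (\<integral>\<^sup>+w. emeasure \<mu> (V w) \<partial>count_space I)"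
    proof (rule nn_integral_mono)
      fix w assume "w \<in> space (count_space I)"
      then have w: "w \<in> I" by simp
      have "ennreal (c * measure \<mu> (cyl A [b])) * emeasure \<mu> (cyl A w)
          = ennreal (c * measure \<mu> (cyl A [b]) * measure \<mu> (cyl A w))"
        using cpos by (simp add: emeasure_eq_measure ennreal_mult)
      also have "\<dots> \<le> ennreal (measure \<mu> (V w))" using Vb[OF w] by (rule ennreal_leI)
      finally show "ennreal (c * measure \<mu> (cyl A [b])) * emeasure \<mu> (cyl A w) \<le> emeasure \<mu> (V w)"
        by (simp add: emeasure_eq_measure)
    qed
    also have "\<dots> = emeasure \<mu> (\<Union>w\<in>I. V w)"
      by (rule emeasure_UN_countable[OF Vs cI disj, symmetric])
    also have "\<dots> \<le> emeasure \<mu> T"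
      using VT Ts by (intro emeasure_mono) auto
    finally have "ennreal (c * measure \<mu> (cyl A [b]) * measure \<mu> (cyl A [a])) \<le> ennreal (measure \<mu> T)"
      using cpos by (simp add: emeasure_eq_measure ennreal_mult)
    then have "c * measure \<mu> (cyl A [b]) * measure \<mu> (cyl A [a]) \<le> measure \<mu> T"
      by (simp add: ennreal_le_iff)
    then show "c * measure \<mu> (cyl A [a]) * measure \<mu> (cyl A [b]) \<le> measure \<mu> T"
      by (simp add: algebra_simps)
  qed
qed

end
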